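(* Let $m\ge 0$ and $N\ge m+1$ be integers. For $k\ge 0$ put $c_k(N)=\sum_{i=0}^{N-1} i^k$ (with $0^0=1$), and let $H_m(N)$ be the $(m+1)\times(m+1)$ Hankel matrix whose $(r,s)$ entry ($1\le r,s\le m+1$) is $c_{r+s-2}(N)$. For $0\le i\le m$ let $M^{(m)}_{(i+1),1}(N)$ be the minor of $H_m(N)$ obtained by deleting row $i+1$ and column $1$ (for $m=0$ this minor is $1$), and set $$a_{im}(N)=(-1)^i\,\frac{M^{(m)}_{(i+1),1}(N)}{\det H_m(N)},\qquad h_m(n,N)=\sum_{i=0}^m a_{im}(N)\,n^i .$$ Then for every integer $n$ with $0\le n\le N-1$, $$h_m(n,N)=\frac{(m+1)^2}{N}\,{}_3F_2\!\left(\begin{matrix}-m,\ n+1,\ m+2\\ 2,\ N+1\end{matrix};1\right)=\frac{(m+1)^2}{N}\,Q_m(-1-n;\,1,\,0,\,-1-N),$$ where $Q_m$ denotes the Hahn polynomial defined below.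
   Context: ${}_3F_2\!\left(\begin{matrix}a_1,a_2,a_3\\ b_1,b_2\end{matrix};1\right)=\sum_{k\ge0}\frac{(a_1)_k(a_2)_k(a_3)_k}{(b_1)_k(b_2)_k\,k!}$, with $(a)_k=a(a+1)\cdots(a+k-1)$ the Pochhammer symbol; when $a_1=-m$ the sum terminates at $k=m$. The Hahn polynomial is defined by $Q_m(y;\alpha,\beta,M)={}_3F_2\!\left(\begin{matrix}-m,\ m+\alpha+\beta+1,\ -y\\ \alpha+1,\ -M\end{matrix};1\right)$, the sum taken from $k=0$ to $m$. The functions $h_m(n,N)$ are the discrete Shmaliy polynomials. *)

theory Defs
  imports Complex_Main "Jordan_Normal_Form.Determinant"
begin

definition powsum :: "nat \<Rightarrow> nat \<Rightarrow> real" where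
  "powsum k N = (\<Sum>i<N. (real i) ^ k)"

(* (m+1) x (m+1) Hankel matrix, 0-based indices: entry (r,s) is c_{r+s}(N) *)
definition hankelH :: "nat \<Rightarrow> nat \<Rightarrow> real mat" where
  "hankelH m N = mat (m+1) (m+1) (\<lambda>(r,s). powsum (r+s) N)"

(* a_{im}(N) = (-1)^i M^{(m)}_{(i+1),1}(N) / det H_m(N); minor deletes row i+1, column 1 (1-based) *)
definition coef_a :: "nat \<Rightarrow> nat \<Rightarrow> nat \<Rightarrow> real" where
  "coef_a i m N = (-1) ^ i * det (mat_delete (hankelH m N) i 0) / det (hankelH m N)"

definition shmaliy_h :: "nat \<Rightarrow> real \<Rightarrow> nat \<Rightarrow> real" where
  "shmaliy_h m n N = (\<Sum>i\<le>m. coef_a i m N * n ^ i)"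

definition hyp3F2_term :: "nat \<Rightarrow> real \<Rightarrow> real \<Rightarrow> real \<Rightarrow> real \<Rightarrow> real" where
  "hyp3F2_term m a2 a3 b1 b2 =
     (\<Sum>k\<le>m. pochhammer (- real m) k * pochhammer a2 k * pochhammer a3 k
              / (pochhammer b1 k * pochhammer b2 k * fact k))"

definition hahnQ :: "nat \<Rightarrow> real \<Rightarrow> real \<Rightarrow> real \<Rightarrow> real \<Rightarrow> real" where
  "hahnQ m y \<alpha> \<beta> M = hyp3F2_term m (real m + \<alpha> + \<beta> + 1) (- y) (\<alpha> + 1) (- M)"

end

theory Submission imports Defs "HOL-Computational_Algebra.Polynomial" begin

lemma alt_diff:
  fixes f :: "nat \<Rightarrow> real"
  shows "(\<Sum>l\<le>Suc n. (-1)^l * real (Suc n choose l) * f l)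
       = (\<Sum>l\<le>n. (-1)^l * real (n choose l) * (f l - f (Suc l)))"
proof -
  have "(\<Sum>l\<le>Suc n. (-1)^l * real (Suc n choose l) * f l)
      = f 0 + (\<Sum>l\<le>n. (-1)^(Suc l) * real (Suc n choose Suc l) * f (Suc l))"
    by (subst sum.atMost_Suc_shift) simp
  also have "\<dots> = f 0 - (\<Sum>l\<le>n. (-1)^l * real (n choose l) * f (Suc l))
                 - (\<Sum>l\<le>n. (-1)^l * real (n choose Suc l) * f (Suc l))"
    by (simp add: sum_subtractf[symmetric] sum.distrib[symmetric] algebra_simps sum_negf[symmetric])
  also have "(\<Sum>l\<le>n. (-1)^l * real (n choose Suc l) * f (Suc l))
      = - ((\<Sum>l\<le>Suc n. (-1)^l * real (n choose l) * f l) - f 0)"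
    by (subst sum.atMost_Suc_shift) (simp add: sum_negf[symmetric])
  also have "(\<Sum>l\<le>Suc n. (-1)^l * real (n choose l) * f l) = (\<Sum>l\<le>n. (-1)^l * real (n choose l) * f l)"
    by simp
  finally show ?thesis by (simp add: sum_subtractf algebra_simps)
qed

lemma alt_zero:
  "b < n \<Longrightarrow> (\<Sum>l\<le>n. (-1)^l * real (n choose l) * real ((a + l) choose b)) = 0"
proof (induction n arbitrary: a b)
  case 0 then show ?case by simp
next
  case (Suc n)
  show ?case
  proof (cases b)
    case 0
    then show ?thesis using alt_diff[of n "\<lambda>l. real ((a + l) choose b)"] by simp
  next
    case (Suc b')
    have "(\<Sum>l\<le>Suc n. (-1)^l * real (Suc n choose l) * real ((a + l) choose b))
      = (\<Sum>l\<le>n. (-1)^l * real (n choose l) * (- real ((a + l) choose b')))"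
      by (subst alt_diff) (simp add: Suc)
    also have "\<dots> = - (\<Sum>l\<le>n. (-1)^l * real (n choose l) * real ((a + l) choose b'))"
      by (simp add: sum_negf[symmetric])
    also have "\<dots> = 0" using Suc.IH[of b' a] Suc.prems Suc by simp
    finally show ?thesis .
  qed
qed

lemma choose_sym': "(x + k) choose k = (k + x) choose x"
  proof -
  have "(x+k) choose k = (x+k) choose x" using binomial_symmetric[of k "x+k"] by simp
  then show ?thesis by (simp add: add.commute)
qed

lemma vand:
  "(\<Sum>x\<le>n. ((x + k) choose k) * ((n - x) choose j)) = (n + k + 1) choose (k + j + 1)"
proof (induction n arbitrary: j)
  case 0 then show ?case by (cases j) auto
next
  case (Suc n)
  show ?case
  proof (cases j)
    case 0
    have "(\<Sum>x\<le>Suc n. ((x + k) choose k) * ((Suc n - x) choose j)) = (\<Sum>x\<le>Suc n. (k + x) choose x)"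
      using 0 by (simp add: choose_sym')
    also have "\<dots> = Suc (k + Suc n) choose Suc n" by (rule sum_choose_lower)
    also have "\<dots> = (Suc n + k + 1) choose (k + j + 1)" using 0
      using binomial_symmetric[of "Suc n" "Suc (k + Suc n)"] by (simp add: ac_simps)
    finally show ?thesis .
  next
    case (Suc j')
    have "(\<Sum>x\<le>Suc n. ((x + k) choose k) * ((Suc n - x) choose j))
        = (\<Sum>x\<le>n. ((x + k) choose k) * ((Suc n - x) choose j))" using Suc by simp
    also have "\<dots> = (\<Sum>x\<le>n. ((x + k) choose k) * ((n - x) choose j) + ((x + k) choose k) * ((n - x) choose j'))"
    proof (rule sum.cong)
      fix x assume "x \<in> {..n}"
      then have "Suc n - x = Suc (n - x)" by auto
      then show "((x + k) choose k) * ((Suc n - x) choose j) = ((x + k) choose k) * ((n - x) choose j) + ((x + k) choose k) * ((n - x) choose j')"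
        using Suc by (simp add: distrib_left)
    qed simp
    also have "\<dots> = ((n + k + 1) choose (k + j + 1)) + ((n + k + 1) choose (k + j' + 1))"
      by (simp only: sum.distrib Suc.IH)
    also have "\<dots> = Suc n + k + 1 choose (k + j + 1)" using Suc by simp
    finally show ?thesis .
  qed
qed

lemma fact_poch: "fact n * pochhammer (real n + 1) k = (fact (n + k) :: real)"
proof -
  have "(fact (n + k) :: real) = pochhammer 1 (n + k)" by (rule pochhammer_fact)
  also have "\<dots> = pochhammer 1 n * pochhammer (1 + real n) k" by (rule pochhammer_product')
  finally show ?thesis by (simp add: pochhammer_fact add.commute)
qed

lemma prod_choose: "(\<Prod>i=0..<j. real a - real i) = fact j * real (a choose j)"
proof -
  have "real (a choose j) = (\<Prod>i=0..<j. real a - real i) / fact j"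
    unfolding binomial_gbinomial gbinomial_prod_rev by simp
  then show ?thesis by (simp add: field_simps)
qed

lemma T_ident:
  assumes "j \<le> m"
  shows "(\<Sum>k\<le>m. (-1)^k * real (Suc m choose Suc k) * real ((m + k + 1) choose (m - j))) = real (m choose j)"
proof -
  have "0 = (\<Sum>l\<le>Suc m. (-1)^l * real (Suc m choose l) * real ((m + l) choose (m - j)))"
    using alt_zero[of "m - j" "Suc m" m] by simp
  also have "\<dots> = real (m choose (m - j)) + (\<Sum>k\<le>m. (-1)^(Suc k) * real (Suc m choose Suc k) * real ((m + Suc k) choose (m - j)))"
    by (subst sum.atMost_Suc_shift) simp
  also have "\<dots> = real (m choose j) - (\<Sum>k\<le>m. (-1)^k * real (Suc m choose Suc k) * real ((m + k + 1) choose (m - j)))"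
    using binomial_symmetric[OF assms] by (simp add: sum_negf[symmetric])
  finally show ?thesis by simp
qed

lemma alg_ident:
  fixes s m1 M1 k1 fm fmk fmk1 fk fNk fN fkj fMj fmj :: real
  assumes "m1 \<noteq> 0" "M1 \<noteq> 0" "k1 \<noteq> 0" "fm \<noteq> 0" "fmk \<noteq> 0" "fmk1 \<noteq> 0" "fk \<noteq> 0"
    "fNk \<noteq> 0" "fN \<noteq> 0" "fkj \<noteq> 0" "fMj \<noteq> 0" "fmj \<noteq> 0"
  shows "m1^2 / M1 * ((s * fm / fmk) * (fmk1 / (m1 * fm)) / ((k1 * fk) * (fNk / (M1 * fN)) * fk)) * fk * (fNk / (fkj * fMj))
    = s * ((m1 * fm) / ((k1 * fk) * fmk)) * (fmk1 / (fmj * fkj)) * (fmj * fN / (fm * fMj))"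
  using assms by (simp add: field_simps power2_eq_square)

lemma term_ident:
  assumes "k \<le> m" "j \<le> m" "m \<le> M"
  shows "(real m + 1)^2 / real (Suc M) * (pochhammer (- real m) k * pochhammer (real m + 2) k / (pochhammer 2 k * pochhammer (real (Suc M) + 1) k * fact k)) * fact k * real ((Suc M + k) choose (k + j + 1))
   = (-1)^k * real (Suc m choose Suc k) * real ((m + k + 1) choose (m - j)) * (fact (m - j) * fact M / (fact m * fact (M - j)))"
proof -
  have fS: "\<And>n. (fact (Suc n) :: real) = (real n + 1) * fact n" by simp
  have p1: "pochhammer (- real m) k = (-1)^k * fact m / fact (m - k)"
  proof -
    have "pochhammer (- real m) k = (-1)^k * pochhammer (real (m - k) + 1) k"
      using pochhammer_minus[of "real m" k] assms by (simp add: of_nat_diff)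
    moreover have "fact (m - k) * pochhammer (real (m - k) + 1) k = (fact m :: real)"
      using fact_poch[of "m - k" k] assms by simp
    ultimately show ?thesis by (simp add: field_simps)
  qed
  have p2: "pochhammer (real m + 2) k = fact (m + k + 1) / ((real m + 1) * fact m)"
  proof -
    have eq: "real (m+1) + 1 = real m + 2" by simp
    have eq2: "m + 1 + k = m + k + 1" by simp
    have "fact (m+1) * pochhammer (real m + 2) k = (fact (m+k+1)::real)"
      using fact_poch[of "m+1" k] unfolding eq eq2 .
    then have "(real m + 1) * fact m * pochhammer (real m + 2) k = (fact (m+k+1)::real)"
      by (simp only: Suc_eq_plus1[symmetric] fS)
    then show ?thesis by (simp add: eq_divide_eq mult.commute del: fact_Suc)
  qed
  have p3: "pochhammer 2 k = (real k + 1) * (fact k :: real)"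
  proof -
    have "pochhammer 2 k = (fact (Suc k) :: real)"
      using fact_poch[of 1 k] by simp
    then show ?thesis by (simp only: fS)
  qed
  have p4: "pochhammer (real (Suc M) + 1) k = fact (Suc M + k) / (real (Suc M) * fact M)"
  proof -
    have "fact (Suc M) * pochhammer (real (Suc M) + 1) k = (fact (Suc M + k)::real)"
      using fact_poch[of "Suc M" k] .
    then have "real (Suc M) * fact M * pochhammer (real (Suc M) + 1) k = (fact (Suc M + k)::real)"
      by (simp only: fact_Suc)
    then show ?thesis by (simp add: eq_divide_eq mult.commute del: fact_Suc)
  qed
  have b1: "real ((Suc M + k) choose (k + j + 1)) = fact (Suc M + k) / (fact (k + j + 1) * fact (M - j))"
  proof -
    have "Suc M + k - (k + j + 1) = M - j" by simp
    moreover have "k + j + 1 \<le> Suc M + k" using assms by simp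
    ultimately show ?thesis using binomial_fact[of "k + j + 1" "Suc M + k"] by (simp del: fact_Suc)
  qed
  have b2: "real (Suc m choose Suc k) = ((real m + 1) * fact m) / (((real k + 1) * fact k) * fact (m - k))"
  proof -
    have "real (Suc m choose Suc k) = fact (Suc m) / (fact (Suc k) * fact (m - k))"
      using binomial_fact[of "Suc k" "Suc m"] assms by (simp del: fact_Suc)
    then show ?thesis by (simp only: fS)
  qed
  have b3: "real ((m + k + 1) choose (m - j)) = fact (m + k + 1) / (fact (m - j) * fact (k + j + 1))"
  proof -
    have "m + k + 1 - (m - j) = k + j + 1" using assms by simp
    moreover have "m - j \<le> m + k + 1" by simp
    ultimately show ?thesis using binomial_fact[of "m - j" "m + k + 1"] by (simp del: fact_Suc)
  qed
  show ?thesis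
    unfolding p1 p2 p3 p4 b1 b2 b3
    by (rule alg_ident) simp_all
qed


lemma poch_choose: "pochhammer (real x + 1) k = fact k * real ((x + k) choose k)"
proof -
  have e1: "fact x * pochhammer (real x + 1) k = (fact (x+k)::real)" by (rule fact_poch)
  have e2: "fact x * (fact k * real ((x + k) choose k)) = (fact (x+k)::real)"
    using binomial_fact[of k "x+k"] by (simp add: field_simps)
  from e1 e2 have "fact x * pochhammer (real x + 1) k = fact x * (fact k * real ((x + k) choose k))" by simp
  then show ?thesis by simp
qed

definition gfun :: "nat \<Rightarrow> nat \<Rightarrow> real \<Rightarrow> real" where
  "gfun m N x = (real m + 1)^2 / real N * hyp3F2_term m (x + 1) (real m + 2) 2 (real N + 1)"

lemma g_orth:
  assumes "j \<le> m" "m \<le> M"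
  shows "(\<Sum>x<Suc M. gfun m (Suc M) (real x) * (\<Prod>i=0..<j. real (M - x) - real i))
       = (\<Prod>i=0..<j. real M - real i)"
proof -
  define A where "A k = pochhammer (- real m) k * pochhammer (real m + 2) k /
      (pochhammer 2 k * pochhammer (real (Suc M) + 1) k * fact k)" for k
  define C where "C = (real m + 1)^2 / real (Suc M)"
  have g: "gfun m (Suc M) (real x) = (\<Sum>k\<le>m. C * A k * (fact k * real ((x + k) choose k)))" for x
    unfolding gfun_def hyp3F2_term_def C_def A_def sum_distrib_left poch_choose[symmetric]
    by (rule sum.cong) (simp_all add: ac_simps divide_inverse)
  have "(\<Sum>x<Suc M. gfun m (Suc M) (real x) * (\<Prod>i=0..<j. real (M - x) - real i))
      = (\<Sum>x\<le>M. \<Sum>k\<le>m. C * A k * fact k * fact j * (real ((x + k) choose k) * real ((M - x) choose j)))"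
    unfolding g prod_choose lessThan_Suc_atMost sum_distrib_right
    by (simp add: ac_simps)
  also have "\<dots> = (\<Sum>k\<le>m. C * A k * fact k * fact j * (\<Sum>x\<le>M. real ((x + k) choose k) * real ((M - x) choose j)))"
    by (subst sum.swap) (simp add: sum_distrib_left)
  also have "\<dots> = (\<Sum>k\<le>m. C * A k * fact k * fact j * real ((Suc M + k) choose (k + j + 1)))"
  proof (rule sum.cong)
    fix k
    have "(\<Sum>x\<le>M. real ((x + k) choose k) * real ((M - x) choose j)) = real (\<Sum>x\<le>M. ((x + k) choose k) * ((M - x) choose j))"
      by simp
    also have "\<dots> = real ((Suc M + k) choose (k + j + 1))" using vand[where n=M and k=k and j=j] by simp
    finally show "C * A k * fact k * fact j * (\<Sum>x\<le>M. real ((x + k) choose k) * real ((M - x) choose j)) = C * A k * fact k * fact j * real ((Suc M + k) choose (k + j + 1))"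
      by simp
  qed simp
  also have "\<dots> = fact j * (\<Sum>k\<le>m. (-1)^k * real (Suc m choose Suc k) * real ((m + k + 1) choose (m - j)) * (fact (m - j) * fact M / (fact m * fact (M - j))))"
    unfolding sum_distrib_left
  proof (rule sum.cong)
    fix k assume "k \<in> {..m}"
    then have k: "k \<le> m" by simp
    show "C * A k * fact k * fact j * real ((Suc M + k) choose (k + j + 1)) = fact j * ((-1)^k * real (Suc m choose Suc k) * real ((m + k + 1) choose (m - j)) * (fact (m - j) * fact M / (fact m * fact (M - j))))"
    proof -
      have t: "C * A k * fact k * real ((Suc M + k) choose (k + j + 1)) = (-1)^k * real (Suc m choose Suc k) * real ((m + k + 1) choose (m - j)) * (fact (m - j) * fact M / (fact m * fact (M - j)))"
        unfolding C_def A_def by (rule term_ident[OF k assms])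
      show ?thesis by (subst t[symmetric]) (simp add: ac_simps)
    qed
  qed simp
  also have "\<dots> = fact j * (real (m choose j) * (fact (m - j) * fact M / (fact m * fact (M - j))))"
    unfolding sum_distrib_right[symmetric] T_ident[OF assms(1)] ..
  also have "\<dots> = fact M / fact (M - j)"
  proof -
    have "real (m choose j) = fact m / (fact j * fact (m - j))" using binomial_fact[OF assms(1)] by simp
    then show ?thesis by (simp add: field_simps)
  qed
  also have "\<dots> = (\<Prod>i=0..<j. real M - real i)"
  proof -
    have "real (M choose j) = fact M / (fact j * fact (M - j))" using binomial_fact[of j M] assms by simp
    then show ?thesis unfolding prod_choose by (simp add: field_simps)
  qed
  finally show ?thesis .
qed


lemma hankel_carrier: "hankelH m N \<in> carrier_mat (m+1) (m+1)"
  unfolding hankelH_def by simp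

lemma hankel_index: "r < m + 1 \<Longrightarrow> s < m + 1 \<Longrightarrow> hankelH m N $$ (r, s) = powsum (r + s) N"
  unfolding hankelH_def by simp

lemma det_hankel_ne:
  assumes "m + 1 \<le> N"
  shows "det (hankelH m N) \<noteq> 0"
proof
  assume "det (hankelH m N) = 0"
  then obtain v where v: "v \<in> carrier_vec (m+1)" "v \<noteq> 0\<^sub>v (m+1)" "hankelH m N *\<^sub>v v = 0\<^sub>v (m+1)"
    using det_0_iff_vec_prod_zero_field[OF hankel_carrier] by blast
  define p where "p = (\<Sum>r\<le>m. monom (v $ r) r)"
  have pp: "poly p x = (\<Sum>r\<le>m. v $ r * x ^ r)" for x
    unfolding p_def poly_sum poly_monom ..
  have row0: "(\<Sum>s<m+1. powsum (r + s) N * v $ s) = 0" if "r < m + 1" for r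
  proof -
    have "(hankelH m N *\<^sub>v v) $ r = 0" using v(3) that by simp
    moreover have "(hankelH m N *\<^sub>v v) $ r = (\<Sum>s<m+1. powsum (r + s) N * v $ s)"
      using that v(1) hankel_carrier[of m N]
      by (auto simp: scalar_prod_def hankel_index atLeast0LessThan intro!: sum.cong)
    ultimately show ?thesis by simp
  qed
  have "0 = (\<Sum>r<m+1. v $ r * (\<Sum>s<m+1. powsum (r + s) N * v $ s))"
    using row0 by simp
  also have "\<dots> = (\<Sum>x<N. (\<Sum>r<m+1. v $ r * real x ^ r) * (\<Sum>s<m+1. v $ s * real x ^ s))"
    unfolding powsum_def sum_distrib_left sum_distrib_right sum_product
    by (subst sum.swap, rule sum.cong, simp, subst sum.swap) (simp add: power_add ac_simps)
  also have "\<dots> = (\<Sum>x<N. (poly p (real x))^2)"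
    unfolding pp power2_eq_square by (simp add: lessThan_Suc_atMost)
  finally have "(\<Sum>x<N. (poly p (real x))^2) = 0" by simp
  then have z: "poly p (real x) = 0" if "x < N" for x
    using that by (subst (asm) sum_nonneg_eq_0_iff) auto
  have dp: "degree p \<le> m"
    unfolding p_def by (rule degree_sum_le) (auto intro: order.trans[OF degree_monom_le])
  have "p = 0"
  proof (rule poly_eqI_degree[of "real ` {..<N}"])
    show "\<And>x. x \<in> real ` {..<N} \<Longrightarrow> poly p x = poly 0 x" using z by auto
    have "card (real ` {..<N}) = N" by (simp add: card_image)
    then show "degree p < card (real ` {..<N})" "degree 0 < card (real ` {..<N})"
      using dp assms by auto
  qed
  then have "v $ r = 0" if "r < m + 1" for r
    using coeff_sum_monom[of r m "\<lambda>r. v $ r"] that unfolding p_def by simp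
  then have "v = 0\<^sub>v (m+1)" using v(1) by (intro eq_vecI) auto
  with v(2) show False by simp
qed

lemma coef_orth:
  assumes "m + 1 \<le> N" "j \<le> m"
  shows "(\<Sum>i\<le>m. coef_a i m N * powsum (i + j) N) = (if j = 0 then 1 else 0)"
proof -
  let ?H = "hankelH m N"
  have "(adj_mat ?H * ?H) $$ (0, j) = (det ?H \<cdot>\<^sub>m 1\<^sub>m (m+1)) $$ (0, j)"
    using adj_mat(3)[OF hankel_carrier] by simp
  moreover have "(det ?H \<cdot>\<^sub>m 1\<^sub>m (m+1)) $$ (0, j) = det ?H * (if j = 0 then 1 else 0)"
    using assms by auto
  moreover have "(adj_mat ?H * ?H) $$ (0, j) = (\<Sum>i<m+1. (-1)^i * det (mat_delete ?H i 0) * powsum (i + j) N)"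
    using assms hankel_carrier[of m N]
    by (auto simp: scalar_prod_def adj_mat_def cofactor_def hankel_index atLeast0LessThan intro!: sum.cong)
  ultimately have "(\<Sum>i<m+1. (-1)^i * det (mat_delete ?H i 0) * powsum (i + j) N) = det ?H * (if j = 0 then 1 else 0)"
    by simp
  then have "(\<Sum>i<m+1. (-1)^i * det (mat_delete ?H i 0) * powsum (i + j) N) / det ?H = (if j = 0 then 1 else 0)"
    using det_hankel_ne[OF assms(1)] by simp
  then show ?thesis
    unfolding coef_a_def sum_divide_distrib lessThan_Suc_atMost[symmetric] Suc_eq_plus1
    by (simp add: ac_simps)
qed

lemma h_orth:
  assumes "m + 1 \<le> N" "j \<le> m"
  shows "(\<Sum>x<N. shmaliy_h m (real x) N * real x ^ j) = (if j = 0 then 1 else 0)"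
proof -
  have "(\<Sum>x<N. shmaliy_h m (real x) N * real x ^ j) = (\<Sum>i\<le>m. coef_a i m N * powsum (i + j) N)"
    unfolding shmaliy_h_def powsum_def sum_distrib_right sum_distrib_left
    by (subst sum.swap) (simp add: power_add ac_simps)
  then show ?thesis using coef_orth[OF assms] by simp
qed


lemma basis_orth:
  fixes w :: "nat \<Rightarrow> real" and b :: "nat \<Rightarrow> real poly"
  assumes db: "\<And>j. j \<le> m \<Longrightarrow> degree (b j) = j"
    and cb: "\<And>j. j \<le> m \<Longrightarrow> coeff (b j) j \<noteq> 0"
    and ob: "\<And>j. j \<le> m \<Longrightarrow> (\<Sum>x<N. w x * poly (b j) (real x)) = poly (b j) 0"
  shows "degree p \<le> m \<Longrightarrow> (\<Sum>x<N. w x * poly p (real x)) = poly p 0"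
proof -
  have main: "\<forall>p. degree p \<le> d \<longrightarrow> d \<le> m \<longrightarrow> (\<Sum>x<N. w x * poly p (real x)) = poly p 0" for d
  proof (induction d)
    case 0
    show ?case
    proof (intro allI impI)
      fix p :: "real poly" assume dp: "degree p \<le> 0" and "0 \<le> m"
      define c where "c = coeff p 0 / coeff (b 0) 0"
      have "p = smult c (b 0)"
      proof (subst poly_eq_iff, intro allI)
        fix i show "coeff p i = coeff (smult c (b 0)) i"
        proof (cases i)
          case 0 then show ?thesis using cb[of 0] by (simp add: c_def)
        next
          case (Suc i') then show ?thesis using dp db[of 0]
            by (simp add: coeff_eq_0)
        qed
      qed
      then show "(\<Sum>x<N. w x * poly p (real x)) = poly p 0"
        using ob[of 0] by (simp add: sum_distrib_left[symmetric] ac_simps)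
    qed
  next
    case (Suc d)
    show ?case
    proof (intro allI impI)
      fix p :: "real poly" assume dp: "degree p \<le> Suc d" and dm: "Suc d \<le> m"
      define c where "c = coeff p (Suc d) / coeff (b (Suc d)) (Suc d)"
      define p' where "p' = p - smult c (b (Suc d))"
      have "degree p' \<le> d"
      proof (rule degree_le, intro allI impI)
        fix i assume "d < i"
        show "coeff p' i = 0"
        proof (cases "i = Suc d")
          case True then show ?thesis using cb[OF dm] by (simp add: p'_def c_def)
        next
          case False
          then have "i > Suc d" using \<open>d < i\<close> by simp
          then show ?thesis using dp db[OF dm] by (simp add: p'_def coeff_eq_0)
        qed
      qed
      then have ih: "(\<Sum>x<N. w x * poly p' (real x)) = poly p' 0"
        using Suc.IH dm by simp
      have pe: "poly p y = poly p' y + c * poly (b (Suc d)) y" for y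
        by (simp add: p'_def)
      have "(\<Sum>x<N. w x * poly p (real x)) = (\<Sum>x<N. w x * poly p' (real x)) + c * (\<Sum>x<N. w x * poly (b (Suc d)) (real x))"
        unfolding pe by (simp add: sum.distrib sum_distrib_left algebra_simps)
      also have "\<dots> = poly p 0" unfolding ih ob[OF dm] pe ..
      finally show "(\<Sum>x<N. w x * poly p (real x)) = poly p 0" .
    qed
  qed
  assume "degree p \<le> m"
  then show "(\<Sum>x<N. w x * poly p (real x)) = poly p 0" using main[of m] by simp
qed

theorem mainTheorem1:
  fixes m N n :: nat
  assumes "N \<ge> m + 1" and "n \<le> N - 1"
  shows "shmaliy_h m (real n) N
           = (real m + 1)^2 / real N * hyp3F2_term m (real n + 1) (real m + 2) 2 (real N + 1)
       \<and> shmaliy_h m (real n) N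
           = (real m + 1)^2 / real N * hahnQ m (-1 - real n) 1 0 (-1 - real N)"
proof -
  obtain M where NM: "N = Suc M" using assms(1) by (cases N) auto
  have mM: "m \<le> M" using assms(1) NM by simp
  have nN: "n < N" using assms NM by simp
  define hp where "hp = (\<Sum>i\<le>m. monom (coef_a i m N) i)"
  define E where "E k = pochhammer (- real m) k * pochhammer (real m + 2) k /
      (pochhammer 2 k * pochhammer (real N + 1) k * fact k)" for k
  define gp where "gp = smult ((real m + 1)^2 / real N)
      (\<Sum>k\<le>m. smult (E k) (\<Prod>i=0..<k. [:1 + real i, 1:]))"
  have hp_eval: "poly hp y = shmaliy_h m y N" for y
    unfolding hp_def shmaliy_h_def poly_sum poly_monom ..
  have gp_eval: "poly gp y = gfun m N y" for y
    unfolding gp_def gfun_def hyp3F2_term_def poly_smult poly_sum poly_prod E_def pochhammer_prod[of "y + 1"]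
    by (rule arg_cong[where f="\<lambda>t. _ * t"], rule sum.cong) (simp_all add: ac_simps divide_inverse)
  have dhp: "degree hp \<le> m"
    unfolding hp_def by (rule degree_sum_le) (auto intro: order.trans[OF degree_monom_le])
  have dprod: "degree (\<Prod>i=0..<k. [:1 + real i, 1:]) \<le> k" for k
    using degree_prod_sum_le[of "{0..<k}" "\<lambda>i. [:1 + real i, 1:]"] by simp
  have dgp: "degree gp \<le> m"
    unfolding gp_def
    by (rule order.trans[OF degree_smult_le], rule degree_sum_le)
       (auto intro: order.trans[OF degree_smult_le] order.trans[OF dprod])
  define D where "D = hp - gp"
  have dD: "degree D \<le> m" unfolding D_def by (rule degree_diff_le[OF dhp dgp])
  have oh: "(\<Sum>x<N. shmaliy_h m (real x) N * poly D (real x)) = poly D 0"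
  proof (rule basis_orth[of m "\<lambda>j. monom 1 j"])
    fix j assume j: "j \<le> m"
    show "degree (monom (1::real) j) = j" by (simp add: degree_monom_eq)
    show "coeff (monom (1::real) j) j \<noteq> 0" by simp
    show "(\<Sum>x<N. shmaliy_h m (real x) N * poly (monom 1 j) (real x)) = poly (monom 1 j) 0"
      using h_orth[OF assms(1) j] by (simp add: poly_monom)
  qed (rule dD)
  define b where "b j = (\<Prod>i=0..<j. [:real M - real i, -1:])" for j
  have b_eval: "poly (b j) y = (\<Prod>i=0..<j. real M - real i - y)" for j y
    unfolding b_def poly_prod by simp
  have og: "(\<Sum>x<N. gfun m N (real x) * poly D (real x)) = poly D 0"
  proof (rule basis_orth[of m b])
    fix j assume j: "j \<le> m"
    have nz: "\<forall>i\<in>{0..<j}. [:real M - real i, -1:] \<noteq> 0" by simp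
    show "degree (b j) = j"
      unfolding b_def using degree_prod_eq_sum_degree[OF nz] by simp
    have "lead_coeff (b j) = (\<Prod>i=0..<j. lead_coeff [:real M - real i, -1:])"
      unfolding b_def by (rule lead_coeff_prod)
    also have "\<dots> = (-1)^j" by simp
    finally show "coeff (b j) j \<noteq> 0" using \<open>degree (b j) = j\<close> by simp
    have "(\<Sum>x<N. gfun m N (real x) * poly (b j) (real x))
        = (\<Sum>x<Suc M. gfun m (Suc M) (real x) * (\<Prod>i=0..<j. real (M - x) - real i))"
      unfolding NM b_eval
      by (rule sum.cong) (auto simp: of_nat_diff intro!: prod.cong)
    also have "\<dots> = (\<Prod>i=0..<j. real M - real i)" by (rule g_orth[OF j mM])
    also have "\<dots> = poly (b j) 0" unfolding b_eval by simp
    finally show "(\<Sum>x<N. gfun m N (real x) * poly (b j) (real x)) = poly (b j) 0" .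
  qed (rule dD)
  have De: "poly D y = shmaliy_h m y N - gfun m N y" for y
    unfolding D_def by (simp add: hp_eval gp_eval)
  have "(\<Sum>x<N. (poly D (real x))^2) = 0"
    using oh og unfolding power2_eq_square
    by (simp add: De left_diff_distrib sum_subtractf)
  then have "poly D (real n) = 0"
    using nN by (subst (asm) sum_nonneg_eq_0_iff) auto
  then have eq1: "shmaliy_h m (real n) N = gfun m N (real n)" unfolding De by simp
  have eq2: "hahnQ m (-1 - real n) 1 0 (-1 - real N) = hyp3F2_term m (real n + 1) (real m + 2) 2 (real N + 1)"
  proof -
    have a: "real m + 1 + 0 + 1 = real m + 2" "- (-1 - real n) = real n + 1" "(1::real) + 1 = 2"
      "- (-1 - real N) = real N + 1" by simp_all
    show ?thesis unfolding hahnQ_def a hyp3F2_term_def by (simp add: ac_simps)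
  qed
  show ?thesis using eq1 eq2 unfolding gfun_def by simp
qed

end
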